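(* There do not exist properly immersed translating solitons in $\mathbb{H}^2\times\mathbb{R}$ contained inside a solid vertical cylinder $\overline{D}\times\mathbb{R}$, where $\overline{D}\subset\mathbb{H}^2$ is a closed geodesic disk of finite radius.
   Context: $\mathbb{H}^2\times\mathbb{R}$ carries the product metric $\langle\cdot,\cdot\rangle$ of the hyperbolic plane of curvature $-1$ and the real line; $\partial_z$ is the unit vertical field. An oriented immersed surface $M$ with unit normal $\eta$ and mean curvature $H_M$ (half the trace of the second fundamental form with respect to $\eta$) is a translating soliton if $H_M=\langle\eta,\partial_z\rangle$ at every point. *)

theory Defs
  imports "HOL-Analysis.Analysis"
begin

text \<open>Model: H^2 x R = {(x,y,z) : y > 0} in real^3, with the upper half-plane metric
  (dx^2+dy^2)/y^2 + dz^2. Coordinates: x = component 1, y = component 2, z = component 3.\<close>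

definition hdist :: "real \<times> real \<Rightarrow> real \<times> real \<Rightarrow> real" where
  "hdist p q = arcosh (1 + ((fst p - fst q)^2 + (snd p - snd q)^2) / (2 * snd p * snd q))"

definition closed_geodesic_disk :: "real \<times> real \<Rightarrow> real \<Rightarrow> (real \<times> real) set" where
  "closed_geodesic_disk c r = {p. snd p > 0 \<and> hdist p c \<le> r}"

definition Hmetric :: "real^3 \<Rightarrow> real^3 \<Rightarrow> real^3 \<Rightarrow> real" where
  "Hmetric P a b = (a$1 * b$1 + a$2 * b$2) / (P$2)^2 + a$3 * b$3"

text \<open>Christoffel symbols term Gamma(a,b) of the Levi-Civita connection of the product metric.\<close>
definition Christ :: "real^3 \<Rightarrow> real^3 \<Rightarrow> real^3 \<Rightarrow> real^3" where
  "Christ P a b = vector [- (a$1 * b$2 + a$2 * b$1) / P$2, (a$1 * b$1 - a$2 * b$2) / P$2, 0]"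

definition pu :: "(real \<times> real \<Rightarrow> 'b::real_normed_vector) \<Rightarrow> real \<times> real \<Rightarrow> 'b" where
  "pu X w = frechet_derivative X (at w) (1, 0)"

definition pv :: "(real \<times> real \<Rightarrow> 'b::real_normed_vector) \<Rightarrow> real \<times> real \<Rightarrow> 'b" where
  "pv X w = frechet_derivative X (at w) (0, 1)"

fun Cdiff :: "nat \<Rightarrow> (real \<times> real) set \<Rightarrow> (real \<times> real \<Rightarrow> real^3) \<Rightarrow> bool" where
  "Cdiff 0 W X = continuous_on W X"
| "Cdiff (Suc k) W X = (X differentiable_on W \<and> Cdiff k W (pu X) \<and> Cdiff k W (pv X))"

definition smooth_on2 :: "(real \<times> real) set \<Rightarrow> (real \<times> real \<Rightarrow> real^3) \<Rightarrow> bool" where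
  "smooth_on2 W X = (\<forall>k. Cdiff k W X)"

text \<open>Mean curvature (half the trace of the second fundamental form h(X,Y) = <nabla_X Y, N>)
  of the parametrized surface X at parameter w, with respect to the unit normal N.\<close>
definition mean_curv :: "(real \<times> real \<Rightarrow> real^3) \<Rightarrow> real^3 \<Rightarrow> real \<times> real \<Rightarrow> real" where
  "mean_curv X N w =
    (let P = X w; Xu = pu X w; Xv = pv X w;
         E = Hmetric P Xu Xu; F = Hmetric P Xu Xv; G = Hmetric P Xv Xv;
         e = Hmetric P (pu (pu X) w + Christ P Xu Xu) N;
         f = Hmetric P (pu (pv X) w + Christ P Xu Xv) N;
         g = Hmetric P (pv (pv X) w + Christ P Xv Xv) N
     in (e * G - 2 * f * F + g * E) / (2 * (E * G - F^2)))"

definition surface_chart :: "(real \<times> real) set \<Rightarrow> (real \<times> real \<Rightarrow> 'm::topological_space) \<Rightarrow> bool" where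
  "surface_chart W p = (open W \<and> open (p ` W) \<and> (\<exists>q. homeomorphism W (p ` W) p q))"

definition immersed_surface ::
  "((real \<times> real) set \<times> (real \<times> real \<Rightarrow> 'm::topological_space)) set \<Rightarrow> ('m \<Rightarrow> real^3) \<Rightarrow> bool" where
  "immersed_surface A F =
    ((\<forall>(W, p) \<in> A. surface_chart W p \<and> smooth_on2 W (F \<circ> p) \<and>
        (\<forall>w \<in> W. \<forall>a b. a *\<^sub>R pu (F \<circ> p) w + b *\<^sub>R pv (F \<circ> p) w = 0 \<longrightarrow> a = 0 \<and> b = 0))
     \<and> (\<Union>(W, p) \<in> A. p ` W) = UNIV
     \<and> (\<forall>m. (F m)$2 > 0))"

definition unit_normal ::
  "((real \<times> real) set \<times> (real \<times> real \<Rightarrow> 'm::topological_space)) set \<Rightarrow> ('m \<Rightarrow> real^3) \<Rightarrow> ('m \<Rightarrow> real^3) \<Rightarrow> bool" where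
  "unit_normal A F \<eta> =
    (continuous_on UNIV \<eta> \<and> (\<forall>m. Hmetric (F m) (\<eta> m) (\<eta> m) = 1) \<and>
     (\<forall>(W, p) \<in> A. \<forall>w \<in> W. Hmetric (F (p w)) (\<eta> (p w)) (pu (F \<circ> p) w) = 0 \<and>
                              Hmetric (F (p w)) (\<eta> (p w)) (pv (F \<circ> p) w) = 0))"

text \<open>Translating soliton: H = <eta, d/dz> = third component of eta.\<close>
definition translating_soliton ::
  "((real \<times> real) set \<times> (real \<times> real \<Rightarrow> 'm::topological_space)) set \<Rightarrow> ('m \<Rightarrow> real^3) \<Rightarrow> ('m \<Rightarrow> real^3) \<Rightarrow> bool" where
  "translating_soliton A F \<eta> =
    (\<forall>(W, p) \<in> A. \<forall>w \<in> W. mean_curv (F \<circ> p) (\<eta> (p w)) w = (\<eta> (p w))$3)"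

definition proper_into_H2R :: "('m::topological_space \<Rightarrow> real^3) \<Rightarrow> bool" where
  "proper_into_H2R F = (\<forall>K. compact K \<and> K \<subseteq> {q. q$2 > 0} \<longrightarrow> compact (F -` K))"

end

theory Submission
  imports Defs
begin


lemma pd_has_derivative:
  fixes Y :: "real \<times> real \<Rightarrow> 'b::real_normed_vector"
  assumes "Y differentiable at w"
  shows "(Y has_derivative (\<lambda>h. fst h *\<^sub>R pu Y w + snd h *\<^sub>R pv Y w)) (at w)"
proof -
  let ?D = "frechet_derivative Y (at w)"
  have d: "(Y has_derivative ?D) (at w)" using assms frechet_derivative_works by blast
  have lin: "linear ?D" using has_derivative_linear[OF d] .
  have "?D h = fst h *\<^sub>R pu Y w + snd h *\<^sub>R pv Y w" for h
  proof -
    have "h = fst h *\<^sub>R (1,0) + snd h *\<^sub>R (0,1)" by (cases h) simp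
    hence "?D h = ?D (fst h *\<^sub>R (1,0) + snd h *\<^sub>R (0,1))" by (rule arg_cong)
    also have "\<dots> = fst h *\<^sub>R ?D (1,0) + snd h *\<^sub>R ?D (0,1)"
      by (simp only: linear_add[OF lin] linear_scale[OF lin])
    finally show ?thesis by (simp add: pu_def pv_def)
  qed
  hence "?D = (\<lambda>h. fst h *\<^sub>R pu Y w + snd h *\<^sub>R pv Y w)" by auto
  thus ?thesis using d by simp
qed

lemma line_vderiv:
  fixes Y :: "real \<times> real \<Rightarrow> 'b::real_normed_vector"
  assumes "Y differentiable at (w0 + t *\<^sub>R v)"
  shows "((\<lambda>s. Y (w0 + s *\<^sub>R v)) has_vector_derivative
           (fst v *\<^sub>R pu Y (w0 + t *\<^sub>R v) + snd v *\<^sub>R pv Y (w0 + t *\<^sub>R v))) (at t)"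
proof -
  have l: "((\<lambda>s. w0 + s *\<^sub>R v) has_derivative (\<lambda>s. s *\<^sub>R v)) (at t)"
    by (auto intro!: derivative_eq_intros)
  have "((Y \<circ> (\<lambda>s. w0 + s *\<^sub>R v)) has_derivative
     ((\<lambda>h. fst h *\<^sub>R pu Y (w0 + t *\<^sub>R v) + snd h *\<^sub>R pv Y (w0 + t *\<^sub>R v)) \<circ> (\<lambda>s. s *\<^sub>R v))) (at t)"
    by (rule diff_chain_at[OF l pd_has_derivative[OF assms]])
  thus ?thesis unfolding has_vector_derivative_def o_def
    by (simp add: scaleR_add_right)
qed

lemma line_deriv_comp:
  fixes Y :: "real \<times> real \<Rightarrow> real^3"
  assumes "Y differentiable at (w0 + t *\<^sub>R v)"
  shows "((\<lambda>s. Y (w0 + s *\<^sub>R v) $ i) has_real_derivative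
           (fst v * pu Y (w0 + t *\<^sub>R v) $ i + snd v * pv Y (w0 + t *\<^sub>R v) $ i)) (at t)"
proof -
  have "((\<lambda>s. Y (w0 + s *\<^sub>R v) $ i) has_vector_derivative
           (fst v *\<^sub>R pu Y (w0 + t *\<^sub>R v) + snd v *\<^sub>R pv Y (w0 + t *\<^sub>R v)) $ i) (at t)"
    using bounded_linear.has_vector_derivative[OF bounded_linear_vec_nth line_vderiv[OF assms]] .
  thus ?thesis by (simp add: has_real_derivative_iff_has_vector_derivative)
qed



lemma hu_deriv:
  fixes Y :: "real \<times> real \<Rightarrow> real^3"
  assumes "Y differentiable at (a + s, b)"
  shows "((\<lambda>s. Y (a + s, b) $ i) has_real_derivative pu Y (a + s, b) $ i) (at s)"
  using line_deriv_comp[of Y "(a,b)" s "(1,0)" i] assms by simp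

lemma hv_deriv:
  fixes Y :: "real \<times> real \<Rightarrow> real^3"
  assumes "Y differentiable at (a, b + s)"
  shows "((\<lambda>s. Y (a, b + s) $ i) has_real_derivative pv Y (a, b + s) $ i) (at s)"
  using line_deriv_comp[of Y "(a,b)" s "(0,1)" i] assms by simp

lemma dist_sq:
  assumes "0 \<le> s" "s \<le> h" "0 \<le> t" "t \<le> h"
  shows "dist (x0 + s, y0 + t) (x0, y0) \<le> 2 * h"
proof -
  have "dist (x0 + s, y0 + t) (x0, y0) = sqrt (s\<^sup>2 + t\<^sup>2)"
    by (simp add: dist_Pair_Pair dist_real_def)
  also have "\<dots> \<le> \<bar>s\<bar> + \<bar>t\<bar>" by (rule sqrt_sum_squares_le_sum_abs)
  finally show ?thesis using assms by simp
qed

lemma schwarz_comp: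
  fixes X :: "real \<times> real \<Rightarrow> real^3"
  assumes W: "open W" "(x0, y0) \<in> W" and dX: "X differentiable_on W"
    and du: "pu X differentiable_on W" and dv: "pv X differentiable_on W"
    and cA: "continuous_on W (pv (pu X))" and cB: "continuous_on W (pu (pv X))"
  shows "pv (pu X) (x0, y0) $ i = pu (pv X) (x0, y0) $ i"
proof (rule ccontr)
  let ?w = "(x0, y0)"
  let ?A = "\<lambda>w. pv (pu X) w $ i" and ?B = "\<lambda>w. pu (pv X) w $ i"
  assume ne: "?A ?w \<noteq> ?B ?w"
  define e where "e = \<bar>?A ?w - ?B ?w\<bar> / 3"
  have e: "e > 0" using ne by (simp add: e_def)
  obtain d1 where d1: "d1 > 0" "\<forall>x'\<in>W. dist x' ?w < d1 \<longrightarrow> dist (pv (pu X) x') (pv (pu X) ?w) < e"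
    using cA W(2) e unfolding continuous_on_iff by blast
  obtain d2 where d2: "d2 > 0" "\<forall>x'\<in>W. dist x' ?w < d2 \<longrightarrow> dist (pu (pv X) x') (pu (pv X) ?w) < e"
    using cB W(2) e unfolding continuous_on_iff by blast
  obtain r where r: "r > 0" "ball ?w r \<subseteq> W" using W open_contains_ball by blast
  define h where "h = min r (min d1 d2) / 4"
  have h: "h > 0" "2 * h < r" "2 * h < d1" "2 * h < d2" using r d1 d2 by (auto simp: h_def)
  have inW: "(x0 + s, y0 + t) \<in> W" if "0 \<le> s" "s \<le> h" "0 \<le> t" "t \<le> h" for s t
  proof -
    have "dist ?w (x0 + s, y0 + t) < r" using dist_sq[OF that, of x0 y0] h by (simp add: dist_commute)
    thus ?thesis using r by auto
  qed
  have difat: "Y differentiable at (x0 + s, y0 + t)"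
    if "Y differentiable_on W" "0 \<le> s" "s \<le> h" "0 \<le> t" "t \<le> h" for s t and Y :: "real \<times> real \<Rightarrow> real^3"
    using that inW W(1) differentiable_on_eq_differentiable_at by blast
  have closeA: "\<bar>?A (x0 + s, y0 + t) - ?A ?w\<bar> < e" if "0 \<le> s" "s \<le> h" "0 \<le> t" "t \<le> h" for s t
  proof -
    have "dist (pv (pu X) (x0 + s, y0 + t)) (pv (pu X) ?w) < e"
      using d1(2) inW[OF that] dist_sq[OF that, of x0 y0] h by force
    moreover have "\<bar>?A (x0 + s, y0 + t) - ?A ?w\<bar> \<le> dist (pv (pu X) (x0 + s, y0 + t)) (pv (pu X) ?w)"
      unfolding dist_norm using component_le_norm_cart[of "pv (pu X) (x0 + s, y0 + t) - pv (pu X) ?w" i] by simp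
    ultimately show ?thesis by linarith
  qed
  have closeB: "\<bar>?B (x0 + s, y0 + t) - ?B ?w\<bar> < e" if "0 \<le> s" "s \<le> h" "0 \<le> t" "t \<le> h" for s t
  proof -
    have "dist (pu (pv X) (x0 + s, y0 + t)) (pu (pv X) ?w) < e"
      using d2(2) inW[OF that] dist_sq[OF that, of x0 y0] h by force
    moreover have "\<bar>?B (x0 + s, y0 + t) - ?B ?w\<bar> \<le> dist (pu (pv X) (x0 + s, y0 + t)) (pu (pv X) ?w)"
      unfolding dist_norm using component_le_norm_cart[of "pu (pv X) (x0 + s, y0 + t) - pu (pv X) ?w" i] by simp
    ultimately show ?thesis by linarith
  qed
  define \<Delta> where "\<Delta> = X (x0 + h, y0 + h) $ i - X (x0 + h, y0) $ i - X (x0, y0 + h) $ i + X (x0, y0) $ i"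
  obtain \<xi> where \<xi>: "0 < \<xi>" "\<xi> < h"
    "(X (x0 + h, y0 + h) $ i - X (x0 + h, y0) $ i) - (X (x0 + 0, y0 + h) $ i - X (x0 + 0, y0) $ i)
      = (h - 0) * (pu X (x0 + \<xi>, y0 + h) $ i - pu X (x0 + \<xi>, y0) $ i)"
  proof -
    have "\<exists>z. 0 < z \<and> z < h \<and>
      (\<lambda>s. X (x0 + s, y0 + h) $ i - X (x0 + s, y0) $ i) h - (\<lambda>s. X (x0 + s, y0 + h) $ i - X (x0 + s, y0) $ i) 0
      = (h - 0) * (\<lambda>s. pu X (x0 + s, y0 + h) $ i - pu X (x0 + s, y0) $ i) z"
    proof (rule MVT2)
      fix s assume s: "0 \<le> s" "s \<le> h"
      show "((\<lambda>s. X (x0 + s, y0 + h) $ i - X (x0 + s, y0) $ i) has_real_derivative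
              pu X (x0 + s, y0 + h) $ i - pu X (x0 + s, y0) $ i) (at s)"
      proof -
        have a: "X differentiable at (x0 + s, y0 + h)" by (rule difat[OF dX]) (use h s in auto)
        have b: "X differentiable at (x0 + s, y0)" using difat[OF dX, of s 0] h s by auto
        show ?thesis by (intro DERIV_diff hu_deriv a b)
      qed
    qed (use h in auto)
    thus ?thesis using that by auto
  qed
  obtain \<eta> where \<eta>: "0 < \<eta>" "\<eta> < h"
    "pu X (x0 + \<xi>, y0 + h) $ i - pu X (x0 + \<xi>, y0 + 0) $ i = (h - 0) * ?A (x0 + \<xi>, y0 + \<eta>)"
  proof -
    have "\<exists>z. 0 < z \<and> z < h \<and> (\<lambda>t. pu X (x0 + \<xi>, y0 + t) $ i) h - (\<lambda>t. pu X (x0 + \<xi>, y0 + t) $ i) 0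
       = (h - 0) * (\<lambda>t. ?A (x0 + \<xi>, y0 + t)) z"
    proof (rule MVT2)
      fix t assume t: "0 \<le> t" "t \<le> h"
      show "((\<lambda>t. pu X (x0 + \<xi>, y0 + t) $ i) has_real_derivative ?A (x0 + \<xi>, y0 + t)) (at t)"
        by (intro hv_deriv difat[OF du] t) (use \<xi> in auto)
    qed (use h in auto)
    thus ?thesis using that by auto
  qed
  have D1: "\<Delta> = h * h * ?A (x0 + \<xi>, y0 + \<eta>)" using \<xi>(3) \<eta>(3) by (simp add: \<Delta>_def algebra_simps)
  obtain \<tau> where \<tau>: "0 < \<tau>" "\<tau> < h"
    "(X (x0 + h, y0 + h) $ i - X (x0, y0 + h) $ i) - (X (x0 + h, y0 + 0) $ i - X (x0, y0 + 0) $ i)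
      = (h - 0) * (pv X (x0 + h, y0 + \<tau>) $ i - pv X (x0, y0 + \<tau>) $ i)"
  proof -
    have "\<exists>z. 0 < z \<and> z < h \<and>
      (\<lambda>t. X (x0 + h, y0 + t) $ i - X (x0, y0 + t) $ i) h - (\<lambda>t. X (x0 + h, y0 + t) $ i - X (x0, y0 + t) $ i) 0
      = (h - 0) * (\<lambda>t. pv X (x0 + h, y0 + t) $ i - pv X (x0, y0 + t) $ i) z"
    proof (rule MVT2)
      fix t assume t: "0 \<le> t" "t \<le> h"
      have a: "X differentiable at (x0 + h, y0 + t)" by (rule difat[OF dX]) (use h t in auto)
      have b: "X differentiable at (x0, y0 + t)" using difat[OF dX, of 0 t] h t by auto
      show "((\<lambda>t. X (x0 + h, y0 + t) $ i - X (x0, y0 + t) $ i) has_real_derivative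
              pv X (x0 + h, y0 + t) $ i - pv X (x0, y0 + t) $ i) (at t)"
        by (intro DERIV_diff hv_deriv a b)
    qed (use h in auto)
    thus ?thesis using that by auto
  qed
  obtain \<sigma> where \<sigma>: "0 < \<sigma>" "\<sigma> < h"
    "pv X (x0 + h, y0 + \<tau>) $ i - pv X (x0 + 0, y0 + \<tau>) $ i = (h - 0) * ?B (x0 + \<sigma>, y0 + \<tau>)"
  proof -
    have "\<exists>z. 0 < z \<and> z < h \<and> (\<lambda>s. pv X (x0 + s, y0 + \<tau>) $ i) h - (\<lambda>s. pv X (x0 + s, y0 + \<tau>) $ i) 0
       = (h - 0) * (\<lambda>s. ?B (x0 + s, y0 + \<tau>)) z"
    proof (rule MVT2)
      fix s assume s: "0 \<le> s" "s \<le> h"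
      show "((\<lambda>s. pv X (x0 + s, y0 + \<tau>) $ i) has_real_derivative ?B (x0 + s, y0 + \<tau>)) (at s)"
        by (intro hu_deriv difat[OF dv] s) (use \<tau> in auto)
    qed (use h in auto)
    thus ?thesis using that by auto
  qed
  have D2: "\<Delta> = h * h * ?B (x0 + \<sigma>, y0 + \<tau>)" using \<tau>(3) \<sigma>(3) by (simp add: \<Delta>_def algebra_simps)
  have eq: "?A (x0 + \<xi>, y0 + \<eta>) = ?B (x0 + \<sigma>, y0 + \<tau>)" using D1 D2 h(1) by simp
  have "\<bar>?A (x0 + \<xi>, y0 + \<eta>) - ?A ?w\<bar> < e" using closeA \<xi> \<eta> by auto
  moreover have "\<bar>?B (x0 + \<sigma>, y0 + \<tau>) - ?B ?w\<bar> < e" using closeB \<sigma> \<tau> by auto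
  ultimately have "\<bar>?A ?w - ?B ?w\<bar> < 2 * e" using eq by linarith
  moreover have "3 * e = \<bar>?A ?w - ?B ?w\<bar>" by (simp add: e_def)
  ultimately show False using e by linarith
qed

lemma schwarz:
  fixes X :: "real \<times> real \<Rightarrow> real^3"
  assumes "open W" "w \<in> W" "X differentiable_on W"
    "pu X differentiable_on W" "pv X differentiable_on W"
    "continuous_on W (pv (pu X))" "continuous_on W (pu (pv X))"
  shows "pv (pu X) w = pu (pv X) w"
  using schwarz_comp[of W "fst w" "snd w" X] assms by (simp add: vec_eq_iff)



lemma second_order_max:
  fixes \<psi> \<psi>' :: "real \<Rightarrow> real"
  assumes d: "d > 0" and der: "\<And>t. \<bar>t\<bar> < d \<Longrightarrow> (\<psi> has_real_derivative \<psi>' t) (at t)"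
    and der2: "(\<psi>' has_real_derivative c) (at 0)"
    and mx: "\<And>t. \<bar>t\<bar> < d \<Longrightarrow> \<psi> t \<le> \<psi> 0"
  shows "\<psi>' 0 = 0" "c \<le> 0"
proof -
  show z: "\<psi>' 0 = 0"
    by (rule DERIV_local_max[OF der[of 0] d]) (use d mx in auto)
  show "c \<le> 0"
  proof (rule ccontr)
    assume "\<not> c \<le> 0"
    hence "c > 0" by simp
    from DERIV_pos_inc_right[OF der2 this] obtain e where e: "e > 0" "\<And>h. h > 0 \<Longrightarrow> h < e \<Longrightarrow> \<psi>' 0 < \<psi>' (0 + h)"
      by blast
    define t where "t = min e d / 2"
    have t: "t > 0" "t < e" "t < d" using e d by (auto simp: t_def)
    obtain z where z1: "0 < z" "z < t" "\<psi> t - \<psi> 0 = (t - 0) * \<psi>' z"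
      using MVT2[of 0 t \<psi> \<psi>'] der t by force
    have "\<psi>' z > 0" using e(2)[of z] z1 t z by simp
    hence "\<psi> t - \<psi> 0 > 0" using z1 t by simp
    moreover have "\<psi> t \<le> \<psi> 0" using mx t by simp
    ultimately show False by simp
  qed
qed



lemma key_algebra:
  fixes y k k2 \<delta> U1 U2 U3 V1 V2 V3 A1 A2 A3 M1 M2 M3 B1 B2 B3 N1 N2 N3 :: real
  assumes y: "y > 0"
    and ind: "\<And>a b. a*U1+b*V1 = 0 \<Longrightarrow> a*U2+b*V2 = 0 \<Longrightarrow> a*U3+b*V3 = 0 \<Longrightarrow> a = 0 \<and> b = 0"
    and F1u: "- U2/y^2 + k*U3 = 0" and F1v: "- V2/y^2 + k*V3 = 0"
    and F2: "\<And>a b. - (a^2*A2 + 2*a*b*M2 + b^2*B2)/y^2 + 2*(a*U2+b*V2)^2/y^3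
                + k2*(a*U3+b*V3)^2 + k*(a^2*A3 + 2*a*b*M3 + b^2*B3) \<le> 0"
    and Nn: "(N1*N1 + N2*N2)/y^2 + N3*N3 = 1"
    and NU: "(N1*U1 + N2*U2)/y^2 + N3*U3 = 0"
    and NV: "(N1*V1 + N2*V2)/y^2 + N3*V3 = 0"
    and sol: "(e * G - 2 * f * F + g * E) / (2 * (E * G - F^2)) = N3"
    and Edef: "E = (U1*U1 + U2*U2)/y^2 + U3*U3"
    and Fdef: "F = (U1*V1 + U2*V2)/y^2 + U3*V3"
    and Gdef: "G = (V1*V1 + V2*V2)/y^2 + V3*V3"
    and edef: "e = ((A1 + - (U1*U2 + U2*U1)/y)*N1 + (A2 + (U1*U1 - U2*U2)/y)*N2)/y^2 + (A3 + 0)*N3"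
    and fdef: "f = ((M1 + - (U1*V2 + U2*V1)/y)*N1 + (M2 + (U1*V1 - U2*V2)/y)*N2)/y^2 + (M3 + 0)*N3"
    and gdef: "g = ((B1 + - (V1*V2 + V2*V1)/y)*N1 + (B2 + (V1*V1 - V2*V2)/y)*N2)/y^2 + (B3 + 0)*N3"
    and kb: "\<bar>k\<bar> \<le> \<delta>" and k2b: "\<bar>k2\<bar> \<le> \<delta>" and yb: "4 * \<delta> \<le> 1/y"
  shows False
proof -
  define w1 where "w1 = U2*V3 - U3*V2"
  define w2 where "w2 = U3*V1 - U1*V3"
  define w3 where "w3 = U1*V2 - U2*V1"
  have wnz: "w1 \<noteq> 0 \<or> w2 \<noteq> 0 \<or> w3 \<noteq> 0"
  proof (rule ccontr)
    assume "\<not> ?thesis"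
    hence z: "w1 = 0" "w2 = 0" "w3 = 0" by auto
    show False
    proof (cases "U1 = 0 \<and> U2 = 0 \<and> U3 = 0")
      case True thus False using ind[of 1 0] by simp
    next
      case False
      then consider "U1 \<noteq> 0" | "U2 \<noteq> 0" | "U3 \<noteq> 0" by blast
      thus False
      proof cases
        case 1 thus False using ind[of V1 "-U1"] z unfolding w1_def w2_def w3_def
          by (auto simp: algebra_simps)
      next
        case 2 thus False using ind[of V2 "-U2"] z unfolding w1_def w2_def w3_def
          by (auto simp: algebra_simps)
      next
        case 3 thus False using ind[of V3 "-U3"] z unfolding w1_def w2_def w3_def
          by (auto simp: algebra_simps)
      qed
    qed
  qed
  define c2 where "c2 = - 1/y^2"
  have c2: "c2 \<noteq> 0" using y by (simp add: c2_def)
  have cU: "c2*U2 + k*U3 = 0" using F1u by (simp add: c2_def)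
  have cV: "c2*V2 + k*V3 = 0" using F1v by (simp add: c2_def)
  have cx1: "c2*w3 - k*w2 = 0"
  proof -
    have "c2*w3 - k*w2 = U1*(c2*V2 + k*V3) - V1*(c2*U2 + k*U3)" by (simp add: w2_def w3_def algebra_simps)
    thus ?thesis using cU cV by simp
  qed
  have cx3: "c2*w1 = 0"
  proof -
    have "c2*w1 = U2*(c2*V2 + k*V3) - V2*(c2*U2 + k*U3) - k*(U2*V3 - U3*V2) + c2*w1" by (simp add: algebra_simps)
    have "- c2*w1 = U3*(c2*V2 + k*V3) - V3*(c2*U2 + k*U3)" by (simp add: w1_def algebra_simps)
    thus ?thesis using cU cV by simp
  qed
  have w1: "w1 = 0" using cx3 c2 by simp
  define d1 where "d1 = N1/y^2"
  define d2 where "d2 = N2/y^2"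
  have dU: "d1*U1 + d2*U2 + N3*U3 = 0" using NU by (simp add: d1_def d2_def add_divide_distrib)
  have dV: "d1*V1 + d2*V2 + N3*V3 = 0" using NV by (simp add: d1_def d2_def add_divide_distrib)
  have dx1: "d2*w3 - N3*w2 = 0"
  proof -
    have "d2*w3 - N3*w2 = U1*(d1*V1 + d2*V2 + N3*V3) - V1*(d1*U1 + d2*U2 + N3*U3)"
      by (simp add: w2_def w3_def algebra_simps)
    thus ?thesis using dU dV by simp
  qed
  have dx2: "N3*w1 - d1*w3 = 0"
  proof -
    have "N3*w1 - d1*w3 = U2*(d1*V1 + d2*V2 + N3*V3) - V2*(d1*U1 + d2*U2 + N3*U3)"
      by (simp add: w1_def w3_def algebra_simps)
    thus ?thesis using dU dV by simp
  qed
  have dx3: "d1*w2 - d2*w1 = 0"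
  proof -
    have "d1*w2 - d2*w1 = U3*(d1*V1 + d2*V2 + N3*V3) - V3*(d1*U1 + d2*U2 + N3*U3)"
      by (simp add: w1_def w2_def algebra_simps)
    thus ?thesis using dU dV by simp
  qed
  have w2: "w2 \<noteq> 0"
  proof
    assume "w2 = 0"
    hence "w3 = 0" using cx1 c2 by simp
    thus False using wnz w1 \<open>w2 = 0\<close> by simp
  qed
  have d1: "d1 = 0" using dx3 w1 w2 by simp
  have N1: "N1 = 0" using d1 y by (simp add: d1_def)
  have kw: "k = c2*w3/w2" using cx1 w2 by (simp add: field_simps)
  have N3w: "N3 = d2*w3/w2" using dx1 w2 by (simp add: field_simps)
  have kN: "k*N2 = - N3"
  proof -
    have "k*N2 = c2*w3/w2*(d2*y^2)" using kw y by (simp add: d2_def)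
    also have "\<dots> = - (d2*w3/w2)" using y by (simp add: c2_def field_simps)
    finally show ?thesis using N3w by simp
  qed
  have N2: "N2 \<noteq> 0"
  proof
    assume "N2 = 0"
    hence "N3 = 0" using kN by simp
    thus False using Nn N1 \<open>N2 = 0\<close> by simp
  qed
  define l where "l = - 1/N2"
  have lN2: "l*N2 = -1" using N2 by (simp add: l_def)
  have lN3: "l*N3 = k" using kN N2 by (simp add: l_def field_simps)
  define iy where "iy = 1/y"
  have iy: "iy > 0" "4*\<delta> \<le> iy" using y yb by (auto simp: iy_def)
  have r1: "x/y = x*iy" for x by (simp add: iy_def)
  have r2: "x/y^2 = x*iy^2" for x by (simp add: iy_def power_one_over)
  have r3: "x/y^3 = x*iy^3" for x by (simp add: iy_def power_one_over)
  note rr = r1 r2 r3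
  have F2': "- (a^2*A2 + 2*a*b*M2 + b^2*B2)*iy^2 + 2*(a*U2+b*V2)^2*iy^3
                + k2*(a*U3+b*V3)^2 + k*(a^2*A3 + 2*a*b*M3 + b^2*B3) \<le> 0" for a b
    using F2[of a b] by (simp only: rr)
  have E': "E = (U1*U1 + U2*U2)*iy^2 + U3*U3" using Edef by (simp only: rr)
  have F': "F = (U1*V1 + U2*V2)*iy^2 + U3*V3" using Fdef by (simp only: rr)
  have G': "G = (V1*V1 + V2*V2)*iy^2 + V3*V3" using Gdef by (simp only: rr)
  have e': "e = ((A1 + - (U1*U2 + U2*U1)*iy)*N1 + (A2 + (U1*U1 - U2*U2)*iy)*N2)*iy^2 + (A3 + 0)*N3"
    using edef by (simp only: rr)
  have f': "f = ((M1 + - (U1*V2 + U2*V1)*iy)*N1 + (M2 + (U1*V1 - U2*V2)*iy)*N2)*iy^2 + (M3 + 0)*N3"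
    using fdef by (simp only: rr)
  have g': "g = ((B1 + - (V1*V2 + V2*V1)*iy)*N1 + (B2 + (V1*V1 - V2*V2)*iy)*N2)*iy^2 + (B3 + 0)*N3"
    using gdef by (simp only: rr)
  define q11 where "q11 = - A2*iy^2 + 2*U2^2*iy^3 + k2*U3^2 + k*A3"
  define q12 where "q12 = - M2*iy^2 + 2*U2*V2*iy^3 + k2*U3*V3 + k*M3"
  define q22 where "q22 = - B2*iy^2 + 2*V2^2*iy^3 + k2*V3^2 + k*B3"
  have Qform: "- (a^2*A2 + 2*a*b*M2 + b^2*B2)*iy^2 + 2*(a*U2+b*V2)^2*iy^3
                + k2*(a*U3+b*V3)^2 + k*(a^2*A3 + 2*a*b*M3 + b^2*B3) = a^2*q11 + 2*a*b*q12 + b^2*q22" for a b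
    unfolding q11_def q12_def q22_def by algebra
  have q11: "q11 \<le> 0" using F2'[of 1 0] Qform[of 1 0] by simp
  have qFE: "F^2*q11 - 2*F*E*q12 + E^2*q22 \<le> 0" using F2'[of "-F" E] Qform[of "-F" E]
    by (simp add: power2_eq_square)
  have yiy: "y*iy = 1" using y by (simp add: iy_def)
  have e11: "q11 = l*e + iy*E + (k2 - iy)*U3^2"
    unfolding q11_def e' E' using N1 lN2 kN lN3 by algebra
  have e12: "q12 = l*f + iy*F + (k2 - iy)*U3*V3"
    unfolding q12_def f' F' using N1 lN2 kN lN3 by algebra
  have e22: "q22 = l*g + iy*G + (k2 - iy)*V3^2"
    unfolding q22_def g' G' using N1 lN2 kN lN3 by algebra
  define D where "D = E*G - F^2"
  define S where "S = G*U3^2 - 2*F*U3*V3 + E*V3^2"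
  have Dw: "D = w3^2*iy^4 + S" unfolding D_def S_def E' F' G' w3_def by algebra
  have Sw: "S = (w1^2 + w2^2)*iy^2" unfolding S_def E' F' G' w1_def w2_def by algebra
  have S0: "S \<ge> 0" using Sw by simp
  have Spos: "S > 0"
  proof -
    have "w1^2 + w2^2 > 0" using w2 by (simp add: add_nonneg_pos)
    thus ?thesis using Sw iy by simp
  qed
  have Dpos: "D > 0" using Dw Spos by (simp add: add_nonneg_pos)
  have solv: "e*G - 2*f*F + g*E = 2*D*N3" using sol Dpos by (simp add: D_def field_simps)
  have val: "G*q11 - 2*F*q12 + E*q22 = 2*k*D + 2*iy*D + (k2 - iy)*S"
  proof -
    have "G*q11 - 2*F*q12 + E*q22 = l*(e*G - 2*f*F + g*E) + 2*iy*D + (k2 - iy)*S"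
      unfolding e11 e12 e22 D_def S_def by algebra
    also have "\<dots> = 2*k*D + 2*iy*D + (k2 - iy)*S" using solv lN3 by (simp add: algebra_simps)
    finally show ?thesis .
  qed
  have "(k2 - iy)*S \<ge> (k2 - iy)*D"
    using Dw S0 k2b iy by (intro mult_left_mono_neg) auto
  hence "G*q11 - 2*F*q12 + E*q22 \<ge> (2*k + iy + k2)*D" using val by (simp add: algebra_simps)
  moreover have "2*k + iy + k2 > 0" using kb k2b iy by linarith
  ultimately have pos: "G*q11 - 2*F*q12 + E*q22 > 0" using Dpos
    by (smt (verit) mult_pos_pos)
  have Epos: "E > 0"
  proof -
    have "E \<ge> 0" using E' by (simp add: add_nonneg_nonneg)
    moreover have "E \<noteq> 0"
    proof
      assume "E = 0"
      hence "D = -(F^2)" by (simp add: D_def)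
      thus False using Dpos by (smt (verit) zero_le_power2)
    qed
    ultimately show ?thesis by simp
  qed
  have "E*(G*q11 - 2*F*q12 + E*q22) = (F^2*q11 - 2*F*E*q12 + E^2*q22) + D*q11"
    unfolding D_def by algebra
  moreover have "D*q11 \<le> 0" using Dpos q11 by (simp add: mult_nonneg_nonpos)
  ultimately have "E*(G*q11 - 2*F*q12 + E*q22) \<le> 0" using qFE by linarith
  thus False using Epos pos by (simp add: mult_le_0_iff)
qed



definition hh :: "real \<Rightarrow> real \<Rightarrow> real" where "hh d z = - d * sqrt (1 + z^2)"
definition hh1 :: "real \<Rightarrow> real \<Rightarrow> real" where "hh1 d z = - d * z / sqrt (1 + z^2)"
definition hh2 :: "real \<Rightarrow> real \<Rightarrow> real" where "hh2 d z = - d / ((1 + z^2) * sqrt (1 + z^2))"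

lemma sq_pos: "0 < 1 + (z::real)^2" by (simp add: add_pos_nonneg)

lemma sqrt_deriv: "((\<lambda>z. sqrt (1 + z^2)) has_real_derivative z / sqrt (1 + z^2)) (at z)"
proof -
  have "((\<lambda>z. sqrt (1 + z^2)) has_real_derivative inverse (sqrt (1 + z^2)) / 2 * (2 * z)) (at z)"
  proof -
    have d1: "DERIV sqrt (1+z^2) :> inverse (sqrt (1 + z^2)) / 2" using DERIV_real_sqrt[OF sq_pos] .
    have d2: "((\<lambda>z. 1+z^2) has_real_derivative 2*z) (at z)" by (auto intro!: derivative_eq_intros)
    show ?thesis using DERIV_chain2[OF d1 d2] .
  qed
  thus ?thesis by (simp add: field_simps)
qed

lemma hh_deriv: "(hh d has_real_derivative hh1 d z) (at z)"
proof -
  have "((\<lambda>z. - d * sqrt (1 + z^2)) has_real_derivative - d * (z / sqrt (1 + z^2))) (at z)"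
    by (rule DERIV_cmult[OF sqrt_deriv])
  thus ?thesis unfolding hh_def[abs_def] hh1_def by simp
qed

lemma hh1_deriv: "(hh1 d has_real_derivative hh2 d z) (at z)"
proof -
  have s: "sqrt (1 + z^2) > 0" using sq_pos by simp
  have "((\<lambda>z. z / sqrt (1 + z^2)) has_real_derivative
      (1 * sqrt (1 + z^2) - z * (z / sqrt (1 + z^2))) / (sqrt (1 + z^2) * sqrt (1 + z^2))) (at z)"
    by (rule DERIV_divide[OF DERIV_ident sqrt_deriv]) (use s in simp)
  hence "((\<lambda>z. - d * (z / sqrt (1 + z^2))) has_real_derivative
      - d * ((1 * sqrt (1 + z^2) - z * (z / sqrt (1 + z^2))) / (sqrt (1 + z^2) * sqrt (1 + z^2)))) (at z)"
    by (rule DERIV_cmult)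
  moreover have "- d * ((1 * sqrt (1 + z^2) - z * (z / sqrt (1 + z^2))) / (sqrt (1 + z^2) * sqrt (1 + z^2)))
     = hh2 d z"
  proof -
    have q: "sqrt (1 + z^2) * sqrt (1 + z^2) = 1 + z^2" using sq_pos[of z]
      by (simp del: real_sqrt_mult_self add: real_sqrt_mult[symmetric])
    define t where "t = sqrt (1 + z^2)"
    have t: "t > 0" "t * t = 1 + z^2" using s q by (auto simp: t_def)
    have a: "1 * t - z * (z / t) = 1 / t"
    proof -
      have "1 * t - z * (z / t) = (t * t - z * z) / t" using t by (simp add: field_simps)
      also have "\<dots> = 1 / t" using t by (simp add: power2_eq_square)
      finally show ?thesis .
    qed
    have "- d * ((1 * t - z * (z / t)) / (t * t)) = - d / ((1 + z^2) * t)"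
      unfolding a using t by (simp add: field_simps)
    thus ?thesis unfolding hh2_def t_def .
  qed
  ultimately show ?thesis unfolding hh1_def[abs_def] by simp
qed

lemma hh1_bound: "d \<ge> 0 \<Longrightarrow> \<bar>hh1 d z\<bar> \<le> d"
proof -
  assume d: "d \<ge> 0"
  define t where "t = sqrt (1 + z^2)"
  have s: "t > 0" using sq_pos by (simp add: t_def)
  have "\<bar>z\<bar> \<le> t" unfolding t_def by (rule real_le_rsqrt) simp
  hence "\<bar>z\<bar> / t \<le> 1" using s by simp
  hence "d * (\<bar>z\<bar> / t) \<le> d" using d by (rule mult_left_le)
  moreover have "\<bar>- d * z / t\<bar> = d * (\<bar>z\<bar> / t)"
    using s d by (simp only: abs_divide abs_mult abs_minus abs_of_nonneg abs_of_pos times_divide_eq_right)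
  ultimately have "\<bar>- d * z / t\<bar> \<le> d" by simp
  thus ?thesis unfolding hh1_def t_def .
qed

lemma hh2_bound: "d \<ge> 0 \<Longrightarrow> \<bar>hh2 d z\<bar> \<le> d"
proof -
  assume d: "d \<ge> 0"
  define t where "t = sqrt (1 + z^2)"
  have s: "t \<ge> 1" by (simp add: t_def)
  have z1: "1 + z^2 \<ge> 1" by simp
  have p: "(1 + z^2) * t \<ge> 1" using mult_mono[OF z1 s] by simp
  have "d / ((1 + z^2) * t) \<le> d / 1"
    by (rule divide_left_mono) (use p d in auto)
  hence a: "d / ((1 + z^2) * t) \<le> d" by simp
  have "\<bar>- d / ((1 + z^2) * t)\<bar> = d / ((1 + z^2) * t)"
    using p d by (simp only: abs_divide abs_minus abs_of_nonneg abs_of_pos)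
  thus ?thesis unfolding hh2_def t_def[symmetric] using a by simp
qed

lemma hh_le: "d \<ge> 0 \<Longrightarrow> hh d z \<le> - d * \<bar>z\<bar>"
proof -
  assume d: "d \<ge> 0"
  have "\<bar>z\<bar> \<le> sqrt (1 + z^2)" by (rule real_le_rsqrt) simp
  hence "d * \<bar>z\<bar> \<le> d * sqrt (1 + z^2)" using d by (rule mult_left_mono)
  thus ?thesis unfolding hh_def by linarith
qed



lemma dir_lemma:
  fixes X :: "real \<times> real \<Rightarrow> real^3" and a b \<delta> :: real
  assumes W: "open W" "w0 \<in> W" and dX: "X differentiable_on W"
    and du: "pu X differentiable_on W" and dv: "pv X differentiable_on W"
    and pos: "\<forall>w\<in>W. X w $ 2 > 0"
    and mx: "\<forall>w\<in>W. 1 / (X w $ 2) + hh \<delta> (X w $ 3) \<le> 1 / (X w0 $ 2) + hh \<delta> (X w0 $ 3)"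
  shows "- ((a * pu X w0 $ 2 + b * pv X w0 $ 2) / (X w0 $ 2 * X w0 $ 2))
          + hh1 \<delta> (X w0 $ 3) * (a * pu X w0 $ 3 + b * pv X w0 $ 3) = 0"
    and "- (((a * (a * pu (pu X) w0 $ 2 + b * pv (pu X) w0 $ 2) + b * (a * pu (pv X) w0 $ 2 + b * pv (pv X) w0 $ 2))
            * (X w0 $ 2 * X w0 $ 2) - (a * pu X w0 $ 2 + b * pv X w0 $ 2) * (2 * (X w0 $ 2) * (a * pu X w0 $ 2 + b * pv X w0 $ 2)))
          / ((X w0 $ 2 * X w0 $ 2) * (X w0 $ 2 * X w0 $ 2)))
         + (hh2 \<delta> (X w0 $ 3) * (a * pu X w0 $ 3 + b * pv X w0 $ 3) * (a * pu X w0 $ 3 + b * pv X w0 $ 3)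
            + (a * (a * pu (pu X) w0 $ 3 + b * pv (pu X) w0 $ 3) + b * (a * pu (pv X) w0 $ 3 + b * pv (pv X) w0 $ 3))
              * hh1 \<delta> (X w0 $ 3)) \<le> 0"
proof -
  define v where "v = (a, b)"
  define l where "l = (\<lambda>t. w0 + t *\<^sub>R v)"
  have l0: "l 0 = w0" by (simp add: l_def)
  obtain \<rho> where \<rho>: "\<rho> > 0" "ball w0 \<rho> \<subseteq> W" using W open_contains_ball by blast
  define d where "d = \<rho> / (norm v + 1)"
  have np: "norm v + 1 > 0" by (simp add: add_nonneg_pos)
  have d: "d > 0" using \<rho> np by (simp add: d_def)
  have lW: "l t \<in> W" if "\<bar>t\<bar> < d" for t
  proof -
    have "dist w0 (l t) = \<bar>t\<bar> * norm v" by (simp add: l_def dist_norm)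
    also have "\<dots> \<le> \<bar>t\<bar> * (norm v + 1)" by (simp add: mult_left_mono)
    also have "\<dots> < d * (norm v + 1)" using that by (simp add: add_nonneg_pos mult_strict_right_mono)
    also have "\<dots> = \<rho>" using np by (simp add: d_def)
    finally show ?thesis using \<rho> by auto
  qed
  have difat: "Y differentiable at (l t)" if "Y differentiable_on W" "\<bar>t\<bar> < d" for Y :: "real \<times> real \<Rightarrow> real^3" and t
    using that lW W(1) differentiable_on_eq_differentiable_at by blast
  have lder: "((\<lambda>s. Y (l s) $ i) has_real_derivative (a * pu Y (l t) $ i + b * pv Y (l t) $ i)) (at t)"
    if "Y differentiable_on W" "\<bar>t\<bar> < d" for Y :: "real \<times> real \<Rightarrow> real^3" and t i
    using line_deriv_comp[of Y w0 t v i] difat[OF that] by (simp add: l_def v_def)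
  define Yc where "Yc = (\<lambda>t i. a * pu X (l t) $ i + b * pv X (l t) $ i)"
  define \<psi> where "\<psi> = (\<lambda>t. 1 / (X (l t) $ 2) + hh \<delta> (X (l t) $ 3))"
  define \<psi>' where "\<psi>' = (\<lambda>t. - (Yc t 2 / (X (l t) $ 2 * X (l t) $ 2)) + hh1 \<delta> (X (l t) $ 3) * Yc t 3)"
  have d1: "(\<psi> has_real_derivative \<psi>' t) (at t)" if t: "\<bar>t\<bar> < d" for t
  proof -
    have p: "X (l t) $ 2 \<noteq> 0" using pos lW[OF t] by force
    have a1: "((\<lambda>s. 1 / (X (l s) $ 2)) has_real_derivative (0 * X (l t) $ 2 - 1 * Yc t 2) / (X (l t) $ 2 * X (l t) $ 2)) (at t)"
    proof -
      have x2t: "((\<lambda>s. X (l s) $ 2) has_real_derivative Yc t 2) (at t)"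
        using lder[OF dX t, of 2] by (simp add: Yc_def)
      show ?thesis by (rule DERIV_divide[OF DERIV_const x2t p])
    qed
    have a2: "((\<lambda>s. hh \<delta> (X (l s) $ 3)) has_real_derivative hh1 \<delta> (X (l t) $ 3) * Yc t 3) (at t)"
      using DERIV_chain2[OF hh_deriv lder[OF dX t, of 3]] by (simp add: Yc_def)
    show ?thesis unfolding \<psi>_def \<psi>'_def by (rule DERIV_cong[OF DERIV_add[OF a1 a2]]) simp
  qed
  have t0: "\<bar>0::real\<bar> < d" using d by simp
  have dY: "((\<lambda>s. Yc s i) has_real_derivative
       a * (a * pu (pu X) w0 $ i + b * pv (pu X) w0 $ i) + b * (a * pu (pv X) w0 $ i + b * pv (pv X) w0 $ i)) (at 0)" for i
  proof -
    have "((\<lambda>s. a * pu X (l s) $ i + b * pv X (l s) $ i) has_real_derivative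
       a * (a * pu (pu X) (l 0) $ i + b * pv (pu X) (l 0) $ i) + b * (a * pu (pv X) (l 0) $ i + b * pv (pv X) (l 0) $ i)) (at 0)"
      by (intro DERIV_add DERIV_cmult lder[OF du t0] lder[OF dv t0])
    thus ?thesis by (simp add: Yc_def l0)
  qed
  have p0: "X w0 $ 2 \<noteq> 0" using pos W by force
  have d2: "(\<psi>' has_real_derivative
     - (((a * (a * pu (pu X) w0 $ 2 + b * pv (pu X) w0 $ 2) + b * (a * pu (pv X) w0 $ 2 + b * pv (pv X) w0 $ 2))
            * (X w0 $ 2 * X w0 $ 2) - (a * pu X w0 $ 2 + b * pv X w0 $ 2) * (2 * (X w0 $ 2) * (a * pu X w0 $ 2 + b * pv X w0 $ 2)))
          / ((X w0 $ 2 * X w0 $ 2) * (X w0 $ 2 * X w0 $ 2)))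
         + (hh2 \<delta> (X w0 $ 3) * (a * pu X w0 $ 3 + b * pv X w0 $ 3) * (a * pu X w0 $ 3 + b * pv X w0 $ 3)
            + (a * (a * pu (pu X) w0 $ 3 + b * pv (pu X) w0 $ 3) + b * (a * pu (pv X) w0 $ 3 + b * pv (pv X) w0 $ 3))
              * hh1 \<delta> (X w0 $ 3))) (at 0)"
  proof -
    have x2: "((\<lambda>s. X (l s) $ 2) has_real_derivative Yc 0 2) (at 0)" using lder[OF dX t0, of 2] by (simp add: Yc_def)
    have x3: "((\<lambda>s. X (l s) $ 3) has_real_derivative Yc 0 3) (at 0)" using lder[OF dX t0, of 3] by (simp add: Yc_def)
    have sq: "((\<lambda>s. X (l s) $ 2 * X (l s) $ 2) has_real_derivative
        Yc 0 2 * X (l 0) $ 2 + Yc 0 2 * X (l 0) $ 2) (at 0)"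
      by (rule DERIV_mult[OF x2 x2])
    have b1: "((\<lambda>s. Yc s 2 / (X (l s) $ 2 * X (l s) $ 2)) has_real_derivative
       ((a * (a * pu (pu X) w0 $ 2 + b * pv (pu X) w0 $ 2) + b * (a * pu (pv X) w0 $ 2 + b * pv (pv X) w0 $ 2))
         * (X (l 0) $ 2 * X (l 0) $ 2) - Yc 0 2 * (Yc 0 2 * X (l 0) $ 2 + Yc 0 2 * X (l 0) $ 2))
        / ((X (l 0) $ 2 * X (l 0) $ 2) * (X (l 0) $ 2 * X (l 0) $ 2))) (at 0)"
      by (rule DERIV_divide[OF dY sq]) (use p0 l0 in simp)
    have b2: "((\<lambda>s. hh1 \<delta> (X (l s) $ 3)) has_real_derivative hh2 \<delta> (X (l 0) $ 3) * Yc 0 3) (at 0)"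
      by (rule DERIV_chain2[OF hh1_deriv x3])
    have b3: "((\<lambda>s. hh1 \<delta> (X (l s) $ 3) * Yc s 3) has_real_derivative
       hh2 \<delta> (X (l 0) $ 3) * Yc 0 3 * Yc 0 3 +
       (a * (a * pu (pu X) w0 $ 3 + b * pv (pu X) w0 $ 3) + b * (a * pu (pv X) w0 $ 3 + b * pv (pv X) w0 $ 3))
         * hh1 \<delta> (X (l 0) $ 3)) (at 0)"
      by (rule DERIV_mult[OF b2 dY])
    show ?thesis unfolding \<psi>'_def
      by (rule DERIV_cong[OF DERIV_add[OF DERIV_minus[OF b1] b3]]) (simp add: l0 Yc_def algebra_simps)
  qed
  have mx': "\<psi> t \<le> \<psi> 0" if "\<bar>t\<bar> < d" for t
    using mx lW[OF that] by (simp add: \<psi>_def l0)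
  note so = second_order_max[OF d d1 d2 mx']
  show "- ((a * pu X w0 $ 2 + b * pv X w0 $ 2) / (X w0 $ 2 * X w0 $ 2))
          + hh1 \<delta> (X w0 $ 3) * (a * pu X w0 $ 3 + b * pv X w0 $ 3) = 0"
    using so(1) by (simp only: \<psi>'_def Yc_def l0)
  show "- (((a * (a * pu (pu X) w0 $ 2 + b * pv (pu X) w0 $ 2) + b * (a * pu (pv X) w0 $ 2 + b * pv (pv X) w0 $ 2))
            * (X w0 $ 2 * X w0 $ 2) - (a * pu X w0 $ 2 + b * pv X w0 $ 2) * (2 * (X w0 $ 2) * (a * pu X w0 $ 2 + b * pv X w0 $ 2)))
          / ((X w0 $ 2 * X w0 $ 2) * (X w0 $ 2 * X w0 $ 2)))
         + (hh2 \<delta> (X w0 $ 3) * (a * pu X w0 $ 3 + b * pv X w0 $ 3) * (a * pu X w0 $ 3 + b * pv X w0 $ 3)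
            + (a * (a * pu (pu X) w0 $ 3 + b * pv (pu X) w0 $ 3) + b * (a * pu (pv X) w0 $ 3 + b * pv (pv X) w0 $ 3))
              * hh1 \<delta> (X w0 $ 3)) \<le> 0"
    using so(2) .
qed



lemma contF:
  fixes A :: "((real \<times> real) set \<times> (real \<times> real \<Rightarrow> 'm::t2_space)) set" and F :: "'m \<Rightarrow> real^3"
  assumes "immersed_surface A F"
  shows "continuous_on UNIV F"
proof -
  have "isCont F m" for m
  proof -
    have "m \<in> (\<Union>(W, p) \<in> A. p ` W)" using assms unfolding immersed_surface_def by auto
    then obtain W p where Wp: "(W, p) \<in> A" "m \<in> p ` W" by auto
    have ch: "surface_chart W p" and sm: "smooth_on2 W (F \<circ> p)"
      using assms Wp(1) unfolding immersed_surface_def by auto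
    obtain q where h: "homeomorphism W (p ` W) p q" and o: "open W" "open (p ` W)"
      using ch unfolding surface_chart_def by blast
    have c0: "continuous_on W (F \<circ> p)" using sm unfolding smooth_on2_def
      by (metis Cdiff.simps(1))
    have cq: "continuous_on (p ` W) q" and qW: "q ` (p ` W) = W" and pq: "\<forall>y\<in>p ` W. p (q y) = y"
      using h unfolding homeomorphism_def by auto
    have "continuous_on (p ` W) ((F \<circ> p) \<circ> q)"
      by (rule continuous_on_compose[OF cq]) (simp only: qW c0)
    hence "continuous_on (p ` W) F"
      by (rule continuous_on_cong[THEN iffD1, rotated 2]) (use pq in auto)
    thus ?thesis using continuous_on_eq_continuous_at[OF o(2)] Wp(2) by blast
  qed
  thus ?thesis by (simp add: continuous_at_imp_continuous_on)
qed

lemma disk_bounds: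
  assumes c: "snd c > 0" and r: "r > 0" and m: "(x, y) \<in> closed_geodesic_disk c r"
  shows "y > 0" "y \<le> 2 * snd c * cosh r" "snd c / (2 * cosh r) \<le> y" "\<bar>x - fst c\<bar> \<le> 2 * snd c * cosh r"
proof -
  show y: "y > 0" using m by (simp add: closed_geodesic_disk_def)
  define C where "C = cosh r"
  define cy where "cy = snd c"
  define Q where "Q = (x - fst c)^2 + (y - cy)^2"
  have C1: "C \<ge> 1" by (simp add: C_def cosh_real_ge_1)
  have cy: "cy > 0" using c by (simp add: cy_def)
  have Q0: "Q \<ge> 0" by (simp add: Q_def)
  define t where "t = 1 + Q / (2 * y * cy)"
  have t1: "t \<ge> 1" using Q0 y cy by (simp add: t_def)
  have "arcosh t \<le> r" using m by (simp add: closed_geodesic_disk_def hdist_def t_def Q_def cy_def)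
  hence "cosh (arcosh t) \<le> cosh r"
    using cosh_real_nonneg_le_iff[of "arcosh t" r] t1 r by simp
  hence "t \<le> C" using t1 by (simp add: C_def)
  hence "Q / (2 * y * cy) \<le> C - 1" by (simp add: t_def)
  hence Qb: "Q \<le> 2 * y * cy * (C - 1)" using y cy by (simp add: divide_le_eq mult.commute)
  have yb: "y \<le> 2 * cy * C"
  proof -
    have "(y - cy)^2 \<le> Q" by (simp add: Q_def)
    hence "y^2 - 2*y*cy + cy^2 \<le> 2 * y * cy * (C - 1)" using Qb by (simp add: power2_diff)
    moreover have "2 * y * cy * (C - 1) = 2 * y * cy * C - 2 * y * cy" by (simp add: algebra_simps)
    moreover have "y * (2 * cy * C) = 2 * y * cy * C" by (simp add: algebra_simps)
    moreover have "cy^2 \<ge> 0" by simp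
    moreover have "y^2 = y * y" by (simp add: power2_eq_square)
    ultimately have "y * y \<le> y * (2 * cy * C)" by linarith
    thus ?thesis using y by simp
  qed
  thus "y \<le> 2 * snd c * cosh r" by (simp add: cy_def C_def)
  have "cy \<le> 2 * C * y"
  proof -
    have "(y - cy)^2 \<le> Q" by (simp add: Q_def)
    hence "y^2 - 2*y*cy + cy^2 \<le> 2 * y * cy * (C - 1)" using Qb by (simp add: power2_diff)
    moreover have "2 * y * cy * (C - 1) = 2 * y * cy * C - 2 * y * cy" by (simp add: algebra_simps)
    moreover have "cy * (2 * C * y) = 2 * y * cy * C" by (simp add: algebra_simps)
    moreover have "y^2 \<ge> 0" by simp
    ultimately have "cy^2 \<le> cy * (2 * C * y)" by linarith
    hence "cy * cy \<le> cy * (2 * C * y)" by (simp add: power2_eq_square)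
    thus ?thesis using mult_le_cancel_left_pos[OF cy] by blast
  qed
  hence "cy / (2 * C) \<le> y" using C1 by (subst pos_divide_le_eq) (auto simp: mult.commute)
  thus "snd c / (2 * cosh r) \<le> y" by (simp add: cy_def C_def)
  have "(x - fst c)^2 \<le> (2 * cy * C)^2"
  proof -
    have "(x - fst c)^2 \<le> Q" by (simp add: Q_def)
    also have "\<dots> \<le> 2 * y * cy * (C - 1)" by (rule Qb)
    also have "\<dots> \<le> 2 * (2 * cy * C) * cy * C"
    proof -
      have "y * (cy * (C - 1)) \<le> (2 * cy * C) * (cy * C)"
        using yb y cy C1 by (intro mult_mono) auto
      thus ?thesis by (simp add: algebra_simps)
    qed
    also have "\<dots> = (2 * cy * C)^2" by (simp add: power2_eq_square)
    finally show ?thesis .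
  qed
  hence "\<bar>x - fst c\<bar> \<le> \<bar>2 * cy * C\<bar>" by (simp add: abs_le_square_iff)
  thus "\<bar>x - fst c\<bar> \<le> 2 * snd c * cosh r" using cy C1 by (simp add: cy_def C_def)
qed



lemma F2_conv:
  fixes y a b A2 M2 B2 U2 V2 U3 V3 A3 M3 B3 k k2 :: real
  assumes "y \<noteq> 0"
  shows "- (((a*(a*A2 + b*M2) + b*(a*M2 + b*B2)) * (y*y) - (a*U2+b*V2)*(2*y*(a*U2+b*V2))) / ((y*y)*(y*y)))
     + (k2*(a*U3+b*V3)*(a*U3+b*V3) + (a*(a*A3+b*M3) + b*(a*M3+b*B3))*k)
   = - (a^2*A2 + 2*a*b*M2 + b^2*B2)/y^2 + 2*(a*U2+b*V2)^2/y^3 + k2*(a*U3+b*V3)^2 + k*(a^2*A3 + 2*a*b*M3 + b^2*B3)"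
  using assms by (simp add: field_simps power2_eq_square power3_eq_cube)

theorem theorem5p9:
  fixes A :: "((real \<times> real) set \<times> (real \<times> real \<Rightarrow> 'm::{t2_space, second_countable_topology})) set"
    and F :: "'m \<Rightarrow> real^3" and \<eta> :: "'m \<Rightarrow> real^3"
    and c :: "real \<times> real" and r :: real
  assumes "immersed_surface A F"
    and "unit_normal A F \<eta>"
    and "proper_into_H2R F"
    and "translating_soliton A F \<eta>"
    and "snd c > 0" and "r > 0"
    and "\<forall>m. ((F m)$1, (F m)$2) \<in> closed_geodesic_disk c r"
  shows False
proof -
  note imm = assms(1)[unfolded immersed_surface_def]
  have ypos: "\<And>m. F m $ 2 > 0" using imm by blast
  have cF: "continuous_on UNIV F" by (rule contF[OF assms(1)])
  define C where "C = cosh r"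
  define cy where "cy = snd c"
  define ymax where "ymax = 2 * cy * C"
  define ymin where "ymin = cy / (2 * C)"
  have C1: "C \<ge> 1" by (simp add: C_def cosh_real_ge_1)
  have cy: "cy > 0" using assms(5) by (simp add: cy_def)
  have ymin: "ymin > 0" using C1 cy by (simp add: ymin_def)
  have ymax: "ymax > 0" using C1 cy by (simp add: ymax_def)
  have bnd: "F m $ 2 \<le> ymax" "ymin \<le> F m $ 2" "\<bar>F m $ 1 - fst c\<bar> \<le> ymax" for m
    using disk_bounds[OF assms(5) assms(6) assms(7)[rule_format, of m]]
    by (simp_all add: ymax_def ymin_def cy_def C_def)
  define \<delta> where "\<delta> = 1 / (4 * ymax)"
  have \<delta>: "\<delta> > 0" using ymax by (simp add: \<delta>_def)
  define \<Phi> where "\<Phi> = (\<lambda>m. 1 / (F m $ 2) + hh \<delta> (F m $ 3))"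
  have c\<Phi>: "continuous_on UNIV \<Phi>"
    unfolding \<Phi>_def hh_def
    by (intro continuous_intros cF) (use ypos in \<open>auto simp: less_imp_neq[symmetric]\<close>)
  define m0 :: 'm where "m0 = undefined"
  define R where "R = (1 / ymin - \<Phi> m0) / \<delta>"
  define S where "S = {m. \<Phi> m0 \<le> \<Phi> m}"
  have Sclosed: "closed S" unfolding S_def by (rule closed_Collect_le[OF continuous_on_const c\<Phi>])
  have zb: "\<bar>F m $ 3\<bar> \<le> R" if "m \<in> S" for m
  proof -
    have "1 / (F m $ 2) \<le> 1 / ymin" using bnd(2)[of m] ymin by (simp add: frac_le)
    moreover have "hh \<delta> (F m $ 3) \<le> - \<delta> * \<bar>F m $ 3\<bar>" using hh_le \<delta> by simp
    moreover have "\<Phi> m0 \<le> \<Phi> m" using that by (simp add: S_def)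
    ultimately have "\<delta> * \<bar>F m $ 3\<bar> \<le> 1 / ymin - \<Phi> m0" unfolding \<Phi>_def by linarith
    thus ?thesis unfolding R_def using \<delta> by (simp add: pos_le_divide_eq mult.commute)
  qed
  define lo :: "real^3" where "lo = vector [fst c - ymax, ymin, - R]"
  define hi :: "real^3" where "hi = vector [fst c + ymax, ymax, R]"
  have SK: "S \<subseteq> F -` cbox lo hi"
  proof
    fix m assume m: "m \<in> S"
    have "\<forall>i. lo $ i \<le> F m $ i \<and> F m $ i \<le> hi $ i"
      unfolding forall_3 lo_def hi_def using bnd[of m] zb[OF m] by (simp add: abs_le_iff)
    thus "m \<in> F -` cbox lo hi" by (simp add: mem_box_cart)
  qed
  have Kpos: "cbox lo hi \<subseteq> {q. q $ 2 > 0}"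
  proof
    fix q assume "q \<in> cbox lo hi"
    hence "lo $ 2 \<le> q $ 2" by (simp add: mem_box_cart)
    thus "q \<in> {q. q $ 2 > 0}" using ymin by (simp add: lo_def)
  qed
  have "compact (F -` cbox lo hi)"
    using assms(3) Kpos unfolding proper_into_H2R_def by (simp add: compact_cbox)
  hence Scomp: "compact S"
    using compact_Int_closed[OF _ Sclosed] SK by (metis inf.absorb_iff2)
  have m0S: "m0 \<in> S" by (simp add: S_def)
  obtain ms where ms: "ms \<in> S" "\<forall>m\<in>S. \<Phi> m \<le> \<Phi> ms"
    using continuous_attains_sup[OF Scomp _ continuous_on_subset[OF c\<Phi>]] m0S by blast
  have gmax: "\<Phi> m \<le> \<Phi> ms" for m
  proof (cases "m \<in> S")
    case True thus ?thesis using ms by blast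
  next
    case False
    hence "\<Phi> m < \<Phi> m0" by (simp add: S_def)
    moreover have "\<Phi> m0 \<le> \<Phi> ms" using ms m0S by blast
    ultimately show ?thesis by simp
  qed
  have "ms \<in> (\<Union>(W, p) \<in> A. p ` W)" using imm by auto
  then obtain W p w0 where Wp: "(W, p) \<in> A" "w0 \<in> W" "ms = p w0" by auto
  have ch: "surface_chart W p" and sm: "smooth_on2 W (F \<circ> p)"
    and ind0: "\<forall>w \<in> W. \<forall>a b. a *\<^sub>R pu (F \<circ> p) w + b *\<^sub>R pv (F \<circ> p) w = 0 \<longrightarrow> a = 0 \<and> b = 0"
    using imm Wp(1) by auto
  have oW: "open W" using ch by (simp add: surface_chart_def)
  define X where "X = F \<circ> p"
  have "Cdiff (Suc (Suc 0)) W X" using sm unfolding smooth_on2_def X_def by blast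
  hence cd: "X differentiable_on W" "pu X differentiable_on W" "pv X differentiable_on W"
    "continuous_on W (pv (pu X))" "continuous_on W (pu (pv X))"
    by simp_all
  have pos: "\<forall>w\<in>W. X w $ 2 > 0" using ypos by (simp add: X_def)
  have mx: "\<forall>w\<in>W. 1 / (X w $ 2) + hh \<delta> (X w $ 3) \<le> 1 / (X w0 $ 2) + hh \<delta> (X w0 $ 3)"
    using gmax Wp(3) by (simp add: X_def \<Phi>_def)
  have sym: "pv (pu X) w0 = pu (pv X) w0" by (rule schwarz[OF oW Wp(2) cd])
  note dl = dir_lemma[OF oW Wp(2) cd(1-3) pos mx, unfolded sym]
  define y where "y = X w0 $ 2"
  have y: "y > 0" using pos Wp(2) by (simp add: y_def)
  define N where "N = \<eta> (p w0)"
  define U where "U = pu X w0"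
  define V where "V = pv X w0"
  define AA where "AA = pu (pu X) w0"
  define M where "M = pu (pv X) w0"
  define B where "B = pv (pv X) w0"
  define k where "k = hh1 \<delta> (X w0 $ 3)"
  define k2 where "k2 = hh2 \<delta> (X w0 $ 3)"
  have F1u: "- (U $ 2) / y^2 + k * (U $ 3) = 0"
    using dl(1)[of 1 0] by (simp add: y_def U_def V_def k_def power2_eq_square)
  have F1v: "- (V $ 2) / y^2 + k * (V $ 3) = 0"
    using dl(1)[of 0 1] by (simp add: y_def U_def V_def k_def power2_eq_square)
  have F2: "- (a^2 * AA$2 + 2*a*b * M$2 + b^2 * B$2)/y^2 + 2*(a * U$2 + b * V$2)^2/y^3
                + k2*(a * U$3 + b * V$3)^2 + k*(a^2 * AA$3 + 2*a*b * M$3 + b^2 * B$3) \<le> 0" for a b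
  proof -
    have yn: "y \<noteq> 0" using y by simp
    have "- (((a*(a*AA$2 + b*M$2) + b*(a*M$2 + b*B$2)) * (y*y) - (a*U$2+b*V$2)*(2*y*(a*U$2+b*V$2))) / ((y*y)*(y*y)))
     + (k2*(a*U$3+b*V$3)*(a*U$3+b*V$3) + (a*(a*AA$3+b*M$3) + b*(a*M$3+b*B$3))*k)
     = - (a^2*AA$2 + 2*a*b*M$2 + b^2*B$2)/y^2 + 2*(a*U$2+b*V$2)^2/y^3 + k2*(a*U$3+b*V$3)^2
       + k*(a^2*AA$3 + 2*a*b*M$3 + b^2*B$3)"
      by (rule F2_conv[OF yn])
    moreover have "- (((a*(a*AA$2 + b*M$2) + b*(a*M$2 + b*B$2)) * (y*y) - (a*U$2+b*V$2)*(2*y*(a*U$2+b*V$2))) / ((y*y)*(y*y)))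
     + (k2*(a*U$3+b*V$3)*(a*U$3+b*V$3) + (a*(a*AA$3+b*M$3) + b*(a*M$3+b*B$3))*k) \<le> 0"
      using dl(2)[of a b] by (simp only: y_def U_def V_def AA_def M_def B_def k_def k2_def)
    ultimately show ?thesis by simp
  qed
  have indep: "a = 0 \<and> b = 0" if h: "a*U$1+b*V$1 = 0" "a*U$2+b*V$2 = 0" "a*U$3+b*V$3 = 0" for a b
  proof -
    have "a *\<^sub>R U + b *\<^sub>R V = 0" using h by (simp add: vec_eq_iff forall_3)
    thus ?thesis using ind0 Wp(2) by (simp add: U_def V_def X_def)
  qed
  note un = assms(2)[unfolded unit_normal_def]
  have Xw0: "X w0 = F (p w0)" by (simp add: X_def)
  have Nn0: "Hmetric (X w0) N N = 1" using un by (simp add: Xw0 N_def)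
  have NU0: "Hmetric (X w0) N U = 0" and NV0: "Hmetric (X w0) N V = 0"
    using un Wp by (fastforce simp: Xw0 N_def U_def V_def X_def)+
  have Nn: "(N$1*N$1 + N$2*N$2)/y^2 + N$3*N$3 = 1" using Nn0 by (simp only: Hmetric_def y_def)
  have NU: "(N$1*U$1 + N$2*U$2)/y^2 + N$3*U$3 = 0" using NU0 by (simp only: Hmetric_def y_def)
  have NV: "(N$1*V$1 + N$2*V$2)/y^2 + N$3*V$3 = 0" using NV0 by (simp only: Hmetric_def y_def)
  have sol0: "mean_curv X N w0 = N $ 3"
    using assms(4) Wp unfolding translating_soliton_def by (fastforce simp: X_def N_def)
  define P where "P = X w0"
  define e where "e = Hmetric P (AA + Christ P U U) N"
  define f where "f = Hmetric P (M + Christ P U V) N"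
  define g where "g = Hmetric P (B + Christ P V V) N"
  define EE where "EE = Hmetric P U U"
  define FF where "FF = Hmetric P U V"
  define GG where "GG = Hmetric P V V"
  have sol: "(e * GG - 2 * f * FF + g * EE) / (2 * (EE * GG - FF^2)) = N $ 3"
    using sol0 unfolding mean_curv_def Let_def
    by (simp only: e_def f_def g_def EE_def FF_def GG_def P_def U_def V_def AA_def M_def B_def)
  have Py: "P $ 2 = y" by (simp add: P_def y_def)
  have Edef: "EE = (U$1*U$1 + U$2*U$2)/y^2 + U$3*U$3" by (simp only: EE_def Hmetric_def Py)
  have Fdef: "FF = (U$1*V$1 + U$2*V$2)/y^2 + U$3*V$3" by (simp only: FF_def Hmetric_def Py)
  have Gdef: "GG = (V$1*V$1 + V$2*V$2)/y^2 + V$3*V$3" by (simp only: GG_def Hmetric_def Py)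
  have edef: "e = ((AA$1 + - (U$1*U$2 + U$2*U$1)/y)*N$1 + (AA$2 + (U$1*U$1 - U$2*U$2)/y)*N$2)/y^2 + (AA$3 + 0)*N$3"
    by (simp only: e_def Hmetric_def Christ_def vector_add_component vector_3 Py)
  have fdef: "f = ((M$1 + - (U$1*V$2 + U$2*V$1)/y)*N$1 + (M$2 + (U$1*V$1 - U$2*V$2)/y)*N$2)/y^2 + (M$3 + 0)*N$3"
    by (simp only: f_def Hmetric_def Christ_def vector_add_component vector_3 Py)
  have gdef: "g = ((B$1 + - (V$1*V$2 + V$2*V$1)/y)*N$1 + (B$2 + (V$1*V$1 - V$2*V$2)/y)*N$2)/y^2 + (B$3 + 0)*N$3"
    by (simp only: g_def Hmetric_def Christ_def vector_add_component vector_3 Py)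
  have kb: "\<bar>k\<bar> \<le> \<delta>" using hh1_bound \<delta> by (simp add: k_def)
  have k2b: "\<bar>k2\<bar> \<le> \<delta>" using hh2_bound \<delta> by (simp add: k2_def)
  have yb: "4 * \<delta> \<le> 1 / y"
  proof -
    have "y \<le> ymax" using bnd(1) by (simp add: y_def X_def)
    hence "1 / ymax \<le> 1 / y" using y by (simp add: frac_le)
    thus ?thesis using ymax by (simp add: \<delta>_def)
  qed
  show False
    by (rule key_algebra[OF y indep F1u F1v F2 Nn NU NV sol Edef Fdef Gdef edef fdef gdef kb k2b yb])
qed


end
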